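(* Let $I \subset S=K[x_1,\ldots,x_n]$ be a monomial ideal ($K$ a field). Then the following are equivalent: (1) $I$ is componentwise polymatroidal. (2) For all monomials $u,v \in I$ with $\deg(u)\leq \deg(v)$ and $u \nmid v$, and for every $i$ with $\deg_{x_i}(v) > \deg_{x_i}(u)$, there exists $j$ with $\deg_{x_j}(v)< \deg_{x_j}(u)$ and $x_j(v/x_i) \in I$.
   Context: For a monomial $u$, $\deg_{x_i}(u)$ is the exponent of $x_i$ in $u$. $G(I)$ denotes the minimal set of monomial generators of a monomial ideal $I$. A monomial ideal $I$ generated in a single degree is polymatroidal if for all $u,v\in G(I)$ and all $i$ with $\deg_{x_i}(u)>\deg_{x_i}(v)$ there exists $j$ with $\deg_{x_j}(u)<\deg_{x_j}(v)$ and $x_j(u/x_i)\in I$. For a monomial ideal $I$, its $j$-th graded component $I_{\langle j\rangle}$ is the ideal generated by all monomials of degree $j$ in $I$. $I$ is componentwise polymatroidal if $I_{\langle j\rangle}$ is polymatroidal for every $j$ (for which it is nonzero). *)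

theory Defs
  imports Main
begin

text \<open>Monomials of S = K[x_0,...,x_{n-1}] are represented by exponent vectors
  u :: nat \<Rightarrow> nat with u k = 0 for k \<ge> n; u k is deg_{x_k}(u).
  A monomial ideal is represented by the set of monomials it contains.\<close>

definition monomials :: "nat \<Rightarrow> (nat \<Rightarrow> nat) set" where
  "monomials n = {u. \<forall>k\<ge>n. u k = 0}"

definition mdvd :: "(nat \<Rightarrow> nat) \<Rightarrow> (nat \<Rightarrow> nat) \<Rightarrow> bool" where
  "mdvd u v \<longleftrightarrow> (\<forall>k. u k \<le> v k)"

definition mdeg :: "nat \<Rightarrow> (nat \<Rightarrow> nat) \<Rightarrow> nat" where
  "mdeg n u = (\<Sum>k<n. u k)"

definition monomial_ideal :: "nat \<Rightarrow> (nat \<Rightarrow> nat) set \<Rightarrow> bool" where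
  "monomial_ideal n I \<longleftrightarrow> I \<subseteq> monomials n \<and>
     (\<forall>u\<in>I. \<forall>v\<in>monomials n. mdvd u v \<longrightarrow> v \<in> I)"

definition ideal_gen :: "nat \<Rightarrow> (nat \<Rightarrow> nat) set \<Rightarrow> (nat \<Rightarrow> nat) set" where
  "ideal_gen n A = {v \<in> monomials n. \<exists>u\<in>A. mdvd u v}"

definition mgens :: "(nat \<Rightarrow> nat) set \<Rightarrow> (nat \<Rightarrow> nat) set" where
  "mgens I = {u \<in> I. \<forall>w\<in>I. mdvd w u \<longrightarrow> w = u}"

definition mexch :: "(nat \<Rightarrow> nat) \<Rightarrow> nat \<Rightarrow> nat \<Rightarrow> (nat \<Rightarrow> nat)" where
  "mexch u i j = (\<lambda>k. u k - (if k = i then 1 else 0) + (if k = j then 1 else 0))"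

definition component :: "nat \<Rightarrow> (nat \<Rightarrow> nat) set \<Rightarrow> nat \<Rightarrow> (nat \<Rightarrow> nat) set" where
  "component n I d = ideal_gen n {u \<in> I. mdeg n u = d}"

definition polymatroidal :: "nat \<Rightarrow> (nat \<Rightarrow> nat) set \<Rightarrow> bool" where
  "polymatroidal n I \<longleftrightarrow>
     (\<exists>d. \<forall>u\<in>mgens I. mdeg n u = d) \<and>
     (\<forall>u\<in>mgens I. \<forall>v\<in>mgens I. \<forall>i<n. u i > v i \<longrightarrow>
        (\<exists>j<n. u j < v j \<and> mexch u i j \<in> I))"

definition componentwise_polymatroidal :: "nat \<Rightarrow> (nat \<Rightarrow> nat) set \<Rightarrow> bool" where
  "componentwise_polymatroidal n I \<longleftrightarrow>
     (\<forall>d. component n I d \<noteq> {} \<longrightarrow> polymatroidal n (component n I d))"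

end

theory Submission
  imports Defs
begin

lemma eq_of_dvd_deg:
  assumes "u \<in> monomials n" "v \<in> monomials n" "mdvd u v" "mdeg n u = mdeg n v"
  shows "u = v"
proof
  fix k show "u k = v k"
  proof (cases "k < n")
    case True
    show ?thesis
    proof (rule ccontr)
      assume "u k \<noteq> v k"
      with assms(3) have "u k < v k" unfolding mdvd_def by (meson le_neq_implies_less)
      hence "(\<Sum>k<n. u k) < (\<Sum>k<n. v k)"
        using assms(3) True by (intro sum_strict_mono_ex1) (auto simp: mdvd_def)
      with assms(4) show False unfolding mdeg_def by simp
    qed
  next
    case False thus ?thesis using assms(1,2) by (simp add: monomials_def)
  qed
qed

lemma mdeg_inc:
  assumes "m < n"
  shows "mdeg n (w(m := Suc (w m))) = Suc (mdeg n w)"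
proof -
  have "mdeg n (w(m := Suc (w m))) = (\<Sum>k<n. w k + (if k = m then 1 else 0))"
    unfolding mdeg_def by (intro sum.cong) auto
  also have "\<dots> = mdeg n w + 1" using assms by (simp add: sum.distrib mdeg_def)
  finally show ?thesis by simp
qed

lemma mdeg_mexch:
  assumes "i < n" "j < n" "v i \<ge> 1"
  shows "mdeg n (mexch v i j) = mdeg n v"
proof -
  have "mdeg n (mexch v i j) + 1 = (\<Sum>k<n. mexch v i j k + (if k = i then 1 else 0))"
    using assms unfolding mdeg_def by (simp add: sum.distrib)
  also have "\<dots> = (\<Sum>k<n. v k + (if k = j then 1 else 0))"
  proof (rule sum.cong)
    fix k show "mexch v i j k + (if k = i then 1 else 0) = v k + (if k = j then 1 else 0)"
      unfolding mexch_def using assms(3) by (cases "k = i"; cases "k = j") simp_all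
  qed simp
  also have "\<dots> = mdeg n v + 1" using assms by (simp add: sum.distrib mdeg_def)
  finally show ?thesis by simp
qed

lemma mexch_mono: "v \<in> monomials n \<Longrightarrow> j < n \<Longrightarrow> mexch v i j \<in> monomials n"
  by (auto simp: monomials_def mexch_def)

lemma fill:
  assumes "u \<in> monomials n" "b \<in> monomials n" "mdvd u b" "mdeg n u + k \<le> mdeg n b"
  shows "\<exists>w \<in> monomials n. mdvd u w \<and> mdvd w b \<and> mdeg n w = mdeg n u + k"
  using assms(4)
proof (induction k)
  case 0 thus ?case using assms by (auto simp: mdvd_def)
next
  case (Suc k)
  then obtain w where w: "w \<in> monomials n" "mdvd u w" "mdvd w b" "mdeg n w = mdeg n u + k" by auto
  have "\<exists>m<n. w m < b m"
  proof (rule ccontr)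
    assume "\<not> ?thesis"
    hence "\<forall>m<n. w m = b m" using w(3) unfolding mdvd_def by (meson le_antisym not_less)
    hence "mdeg n w = mdeg n b" unfolding mdeg_def by simp
    with Suc.prems w(4) show False by simp
  qed
  then obtain m where m: "m < n" "w m < b m" by auto
  let ?w = "w(m := Suc (w m))"
  have "?w \<in> monomials n" using w(1) m by (auto simp: monomials_def)
  moreover have "mdvd u ?w" "mdvd ?w b" using w(2,3) m by (auto simp: mdvd_def le_Suc_eq)
  moreover have "mdeg n ?w = mdeg n u + Suc k" using mdeg_inc[OF m(1)] w(4) by simp
  ultimately show ?case by blast
qed

lemma mgens_comp:
  assumes "monomial_ideal n I"
  shows "mgens (component n I d) = {u \<in> I. mdeg n u = d}"
proof (intro set_eqI iffI)
  fix u assume u: "u \<in> mgens (component n I d)"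
  then obtain z where z: "z \<in> I" "mdeg n z = d" "mdvd z u" "u \<in> monomials n"
    by (auto simp: mgens_def component_def ideal_gen_def)
  have "z \<in> component n I d" using z assms
    by (auto simp: component_def ideal_gen_def monomial_ideal_def mdvd_def)
  hence "z = u" using u z(3) by (auto simp: mgens_def)
  thus "u \<in> {u \<in> I. mdeg n u = d}" using z by auto
next
  fix u assume u: "u \<in> {u \<in> I. mdeg n u = d}"
  have um: "u \<in> monomials n" using u assms by (auto simp: monomial_ideal_def)
  have uc: "u \<in> component n I d" using u um
    by (auto simp: component_def ideal_gen_def mdvd_def)
  show "u \<in> mgens (component n I d)" unfolding mgens_def
  proof (intro CollectI conjI uc ballI impI)
    fix w assume w: "w \<in> component n I d" "mdvd w u"
    then obtain z where z: "z \<in> I" "mdeg n z = d" "mdvd z w" "w \<in> monomials n"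
      by (auto simp: component_def ideal_gen_def)
    have zm: "z \<in> monomials n" using z assms by (auto simp: monomial_ideal_def)
    have "mdvd z u" using z(3) w(2) unfolding mdvd_def using le_trans by blast
    hence "z = u" using eq_of_dvd_deg[OF zm um] z u by auto
    thus "w = u" using z(3) w(2) unfolding mdvd_def by (metis le_antisym ext)
  qed
qed

lemma comp_sub: "monomial_ideal n I \<Longrightarrow> component n I d \<subseteq> I"
  by (auto simp: component_def ideal_gen_def monomial_ideal_def)


theorem proposition1p2:
  fixes n :: nat and I :: "(nat \<Rightarrow> nat) set"
  assumes "monomial_ideal n I"
  shows "componentwise_polymatroidal n I \<longleftrightarrow>
    (\<forall>u\<in>I. \<forall>v\<in>I. mdeg n u \<le> mdeg n v \<and> \<not> mdvd u v \<longrightarrow>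
       (\<forall>i<n. v i > u i \<longrightarrow> (\<exists>j<n. v j < u j \<and> mexch v i j \<in> I)))"
proof
  assume CP: "componentwise_polymatroidal n I"
  show "\<forall>u\<in>I. \<forall>v\<in>I. mdeg n u \<le> mdeg n v \<and> \<not> mdvd u v \<longrightarrow>
       (\<forall>i<n. v i > u i \<longrightarrow> (\<exists>j<n. v j < u j \<and> mexch v i j \<in> I))"
  proof (intro ballI impI allI, elim conjE)
    fix u v i assume u: "u \<in> I" and v: "v \<in> I" and deg: "mdeg n u \<le> mdeg n v"
      and nd: "\<not> mdvd u v" and i: "i < n" and vi: "v i > u i"
    have um: "u \<in> monomials n" and vm: "v \<in> monomials n"
      using u v assms by (auto simp: monomial_ideal_def)
    obtain k0 where k0: "u k0 > v k0" using nd by (auto simp: mdvd_def not_le)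
    have k0n: "k0 < n"
    proof (rule ccontr)
      assume "\<not> k0 < n"
      then have "u k0 = 0" using um by (simp add: monomials_def)
      with k0 show False by simp
    qed
    have k0i: "k0 \<noteq> i" using k0 vi by auto
    define b where "b = (\<lambda>k. if k = i then v i - 1 else max (u k) (v k))"
    have bm: "b \<in> monomials n" using um vm i by (auto simp: b_def monomials_def)
    have ub: "mdvd u b" using vi by (auto simp: b_def mdvd_def)
    define v1 where "v1 = v(i := v i - 1)"
    define c where "c = v1(k0 := Suc (v1 k0))"
    have veq: "v1(i := Suc (v1 i)) = v" using vi by (auto simp: v1_def)
    have "mdeg n v = Suc (mdeg n v1)" using mdeg_inc[OF i, of v1] unfolding veq .
    moreover have "mdeg n c = Suc (mdeg n v1)" unfolding c_def by (rule mdeg_inc[OF k0n])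
    moreover have "mdeg n c \<le> mdeg n b" unfolding mdeg_def
      by (rule sum_mono) (use k0 k0i in \<open>auto simp: c_def v1_def b_def\<close>)
    ultimately have "mdeg n u + (mdeg n v - mdeg n u) \<le> mdeg n b" using deg by simp
    from fill[OF um bm ub this] obtain w where w: "w \<in> monomials n" "mdvd u w" "mdvd w b"
      "mdeg n w = mdeg n v" using deg by auto
    have wI: "w \<in> I" using assms u w by (auto simp: monomial_ideal_def)
    have wg: "w \<in> mgens (component n I (mdeg n v))" and vg: "v \<in> mgens (component n I (mdeg n v))"
      using mgens_comp[OF assms] wI w v by auto
    hence "component n I (mdeg n v) \<noteq> {}" by (auto simp: mgens_def)
    with CP have pm: "polymatroidal n (component n I (mdeg n v))"
      by (auto simp: componentwise_polymatroidal_def)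
    have "w i \<le> b i" using w(3) unfolding mdvd_def by blast
    moreover have "b i < v i" using vi by (simp add: b_def)
    ultimately have "v i > w i" by simp
    moreover note pm
    ultimately obtain j where j: "j < n" "v j < w j" "mexch v i j \<in> component n I (mdeg n v)"
      using wg vg i unfolding polymatroidal_def by blast
    have "v j < b j" using j(2) w(3) unfolding mdvd_def by (metis less_le_trans)
    hence "u j > v j" using vi by (auto simp: b_def split: if_splits)
    thus "\<exists>j<n. v j < u j \<and> mexch v i j \<in> I" using j comp_sub[OF assms] by blast
  qed
next
  assume H: "\<forall>u\<in>I. \<forall>v\<in>I. mdeg n u \<le> mdeg n v \<and> \<not> mdvd u v \<longrightarrow>
       (\<forall>i<n. v i > u i \<longrightarrow> (\<exists>j<n. v j < u j \<and> mexch v i j \<in> I))"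
  show "componentwise_polymatroidal n I"
    unfolding componentwise_polymatroidal_def polymatroidal_def
  proof (intro allI impI conjI ballI)
    fix d
    show "\<exists>d'. \<forall>u\<in>mgens (component n I d). mdeg n u = d'"
      using mgens_comp[OF assms] by auto
    fix u v i assume ug: "u \<in> mgens (component n I d)" and vg: "v \<in> mgens (component n I d)"
      and i: "i < n" and ui: "u i > v i"
    have u: "u \<in> I" "mdeg n u = d" and v: "v \<in> I" "mdeg n v = d"
      using ug vg mgens_comp[OF assms] by auto
    have um: "u \<in> monomials n" and vm: "v \<in> monomials n"
      using u v assms by (auto simp: monomial_ideal_def)
    have "\<not> mdvd v u"
    proof
      assume "mdvd v u"
      hence "v = u" using eq_of_dvd_deg[OF vm um] u v by simp
      with ui show False by simp
    qed
    then obtain j where j: "j < n" "u j < v j" "mexch u i j \<in> I"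
      using H v u i ui by force
    have "mexch u i j \<in> monomials n" using mexch_mono[OF um j(1)] .
    moreover have "mdeg n (mexch u i j) = d" using mdeg_mexch[OF i j(1)] ui u by simp
    ultimately have "mexch u i j \<in> component n I d" using j
      by (auto simp: component_def ideal_gen_def mdvd_def)
    thus "\<exists>j<n. u j < v j \<and> mexch u i j \<in> component n I d" using j by blast
  qed
qed

end
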